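(* Let $0<a,b<1$ and integers $1\le f<N$, and consider the two-strata persistent gambler's ruin process of the context. For integers $0\le m<n<N$ let $\rho_{m,n}$ and $\rho_{n,m}$ be the one-sided first passage probabilities defined in the context. Then: (I.1) for $\ell\ge1$, $j\ge0$ with $f-\ell\ge0$ and $f+j<N$: $\rho_{f-\ell,f+j}=\dfrac{b/(2a)}{\,j+\ell\frac ba-(\ell+j-1)b\,}$; (I.2) for the same $\ell,j$: $\rho_{f+j,f-\ell}=\dfrac{1/2}{\,(j+1)+(\ell-1)\frac ba-(\ell+j-1)b\,}$; (II.1) for $0\le m<m+\ell\le f-1$: $\rho_{m,m+\ell}=\rho_{m+\ell,m}=\dfrac{1}{2(\ell-(\ell-1)a)}$; (II.2) for $f\le m<m+j<N$: $\rho_{m,m+j}=\rho_{m+j,m}=\dfrac{1}{2(j-(j-1)b)}$.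
   Context: The process $(\mathbf X_j)_{j\ge0}$ on $\mathbb Z\cap[-N,N]$ has increments $\varepsilon_j=\mathbf X_j-\mathbf X_{j-1}\in\{\pm1\}$ with $P(\varepsilon_1=1)=P(\varepsilon_1=-1)=\frac12$ and for $j\ge1$, $P(\varepsilon_{j+1}=1\mid\varepsilon_j=1,|\mathbf X_j|=k)=P(\varepsilon_{j+1}=-1\mid\varepsilon_j=-1,|\mathbf X_j|=k)=a_k$ (reversal with probability $1-a_k$), with $a_k=a$ for $0\le k\le f-1$ and $a_k=b$ for $f\le k<N$; it stops when $|\mathbf X_j|=N$. For $m\neq n$ in $(-N,N)$ and the process started at $\mathbf X_0=m$, let $\mathbf L_{m,n}:=\inf\{j\ge1:\mathbf X_j=n\text{ or }|\mathbf X_j|=N\}$. For $m<n$ define $\rho_{m,n}:=P(\mathbf X_j\ge m,\ j=0,\dots,\mathbf L_{m,n}\mid\mathbf X_0=m)$ and $\rho_{n,m}:=P(\mathbf X_j\le n,\ j=0,\dots,\mathbf L_{n,m}\mid\mathbf X_0=n)$. *)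

theory Defs
  imports Complex_Main
begin

definition pgr_a :: "real \<Rightarrow> real \<Rightarrow> int \<Rightarrow> int \<Rightarrow> real" where
  "pgr_a a b f k = (if k < f then a else b)"

definition pgr_pos :: "int \<Rightarrow> int list \<Rightarrow> nat \<Rightarrow> int" where
  "pgr_pos m es j = m + sum_list (take j es)"

text \<open>Probability that the first length(es) increments equal es
  (eps_1 = +-1 with prob 1/2; eps_(i+1) = eps_i with prob a_|X_i|, else reversal).\<close>
definition pgr_path_prob :: "real \<Rightarrow> real \<Rightarrow> int \<Rightarrow> int \<Rightarrow> int list \<Rightarrow> real" where
  "pgr_path_prob a b f m es = (if es = [] then 1 else
     (1/2) * (\<Prod>i\<in>{1..<length es}.
        (let p = pgr_a a b f \<bar>pgr_pos m es i\<bar> in if es ! i = es ! (i - 1) then p else 1 - p)))"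

definition pgr_event :: "int \<Rightarrow> int \<Rightarrow> int \<Rightarrow> int list \<Rightarrow> bool" where
  "pgr_event N m n es = (let k = length es; X = pgr_pos m es in
     1 \<le> k \<and> (X k = n \<or> \<bar>X k\<bar> = N) \<and> (\<forall>j\<in>{1..<k}. X j \<noteq> n \<and> \<bar>X j\<bar> < N) \<and>
     (\<forall>j\<le>k. if m < n then m \<le> X j else X j \<le> m))"

text \<open>rho_{m,n}: probability of the event, as the (countable, disjoint) sum over
  the finite increment paths realising it, grouped by L = k.\<close>
definition pgr_rho :: "real \<Rightarrow> real \<Rightarrow> int \<Rightarrow> int \<Rightarrow> int \<Rightarrow> int \<Rightarrow> real" where
  "pgr_rho a b f N m n = (\<Sum>k. \<Sum>es\<in>{es. length es = k \<and> set es \<subseteq> {-1, 1} \<and> pgr_event N m n es}.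
       pgr_path_prob a b f m es)"

end

theory Submission
  imports Defs
begin

definition qf :: "real \<Rightarrow> real \<Rightarrow> int \<Rightarrow> int \<Rightarrow> real" where
  "qf a b f y = pgr_a a b f \<bar>y\<bar>"

fun pp :: "(int \<Rightarrow> real) \<Rightarrow> int \<Rightarrow> int \<Rightarrow> int list \<Rightarrow> real" where
  "pp q x d [] = 1"
| "pp q x d (e # es) = (if e = d then q x else 1 - q x) * pp q (x + e) e es"

fun hit :: "int \<Rightarrow> int \<Rightarrow> int \<Rightarrow> int list \<Rightarrow> bool" where
  "hit lo n x [] = (x = n)"
| "hit lo n x (e # es) = (lo \<le> x \<and> x < n \<and> hit lo n (x + e) es)"

fun G :: "(int \<Rightarrow> real) \<Rightarrow> int \<Rightarrow> int \<Rightarrow> nat \<Rightarrow> int \<Rightarrow> int \<Rightarrow> real" where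
  "G q lo n 0 x d = (if x = n then 1 else 0)"
| "G q lo n (Suc k) x d = (if lo \<le> x \<and> x < n then
     (if d = 1 then q x else 1 - q x) * G q lo n k (x + 1) 1
   + (if d = 1 then 1 - q x else q x) * G q lo n k (x - 1) (-1) else 0)"

lemma fin_lists: "finite {es :: int list. length es = k \<and> set es \<subseteq> {-1,1} \<and> P es}"
  by (rule finite_subset[OF _ finite_lists_length_eq[of "{-1,1::int}" k]]) auto

lemma split_Suc:
  "{es :: int list. length es = Suc k \<and> set es \<subseteq> {-1,1} \<and> P es} =
   Cons 1 ` {es. length es = k \<and> set es \<subseteq> {-1,1} \<and> P (1 # es)} \<union>
   Cons (-1) ` {es. length es = k \<and> set es \<subseteq> {-1,1} \<and> P ((-1) # es)}"
  by (auto simp: length_Suc_conv)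

lemma S_eq_G:
  assumes "d = 1 \<or> d = -1"
  shows "(\<Sum>es\<in>{es. length es = k \<and> set es \<subseteq> {-1,1} \<and> hit lo n x es}. pp q x d es) = G q lo n k x d"
  using assms
proof (induction k arbitrary: x d)
  case 0
  have "{es::int list. length es = 0 \<and> set es \<subseteq> {-1,1} \<and> hit lo n x es} = (if x = n then {[]} else {})"
    by auto
  then show ?case by simp
next
  case (Suc k)
  show ?case
  proof (cases "lo \<le> x \<and> x < n")
    case False
    then have "{es::int list. length es = Suc k \<and> set es \<subseteq> {-1,1} \<and> hit lo n x es} = {}"
      by (auto simp: length_Suc_conv)
    then show ?thesis by (subst \<open>_ = {}\<close>) (simp only: G.simps if_not_P[OF False] sum.empty)
  next
    case True
    define A1 where "A1 = {es::int list. length es = k \<and> set es \<subseteq> {-1,1} \<and> hit lo n (x+1) es}"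
    define A2 where "A2 = {es::int list. length es = k \<and> set es \<subseteq> {-1,1} \<and> hit lo n (x-1) es}"
    have eq: "{es::int list. length es = Suc k \<and> set es \<subseteq> {-1,1} \<and> hit lo n x es} = Cons 1 ` A1 \<union> Cons (-1) ` A2"
      unfolding split_Suc A1_def A2_def using True by simp
    have f1: "finite A1" "finite A2" unfolding A1_def A2_def by (rule fin_lists)+
    have "(\<Sum>es\<in>Cons 1 ` A1 \<union> Cons (-1) ` A2. pp q x d es) =
          (\<Sum>es\<in>Cons 1 ` A1. pp q x d es) + (\<Sum>es\<in>Cons (-1) ` A2. pp q x d es)"
      by (rule sum.union_disjoint) (use f1 in auto)
    also have "\<dots> = (\<Sum>es\<in>A1. pp q x d (1 # es)) + (\<Sum>es\<in>A2. pp q x d ((-1) # es))"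
      by (simp add: sum.reindex)
    also have "\<dots> = (if d = 1 then q x else 1 - q x) * (\<Sum>es\<in>A1. pp q (x+1) 1 es)
        + (if d = 1 then 1 - q x else q x) * (\<Sum>es\<in>A2. pp q (x-1) (-1) es)"
      using Suc.prems by (auto simp: sum_distrib_left)
    also have "\<dots> = G q lo n (Suc k) x d"
      using Suc.IH[where x="x+1" and d=1] Suc.IH[where x="x-1" and d="-1"] True unfolding A1_def A2_def by simp
    finally show ?thesis using eq by simp
  qed
qed

lemma G_nonneg: "(\<forall>y. 0 \<le> q y \<and> q y \<le> 1) \<Longrightarrow> 0 \<le> G q lo n k x d"
  by (induction k arbitrary: x d) auto

lemma V_rec:
  "(\<Sum>k<Suc K. G q lo n k x d) = (if x = n then 1 else 0) + (if lo \<le> x \<and> x < n then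
     (if d = 1 then q x else 1 - q x) * (\<Sum>k<K. G q lo n k (x + 1) 1)
   + (if d = 1 then 1 - q x else q x) * (\<Sum>k<K. G q lo n k (x - 1) (-1)) else 0)"
proof (cases "lo \<le> x \<and> x < n")
  case True
  then show ?thesis by (simp only: sum.lessThan_Suc_shift) (simp add: sum.distrib sum_distrib_left)
next
  case False
  then show ?thesis by (simp only: sum.lessThan_Suc_shift G.simps if_not_P[OF False]) simp
qed

lemma V_bound:
  assumes "\<forall>y. 0 \<le> q y \<and> q y \<le> 1"
  shows "(\<Sum>k<K. G q lo n k x d) \<le> 1"
proof (induction K arbitrary: x d)
  case 0
  then show ?case by simp
next
  case (Suc K)
  have q: "0 \<le> q x" "q x \<le> 1" using assms by auto
  have n1: "0 \<le> (\<Sum>k<K. G q lo n k y e)" for y e using G_nonneg[OF assms] by (simp add: sum_nonneg)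
  have b1: "c * (\<Sum>k<K. G q lo n k y e) \<le> c" if "0 \<le> c" for c y e
    using mult_left_le[OF Suc.IH[of y e] that] .
  show ?case
  proof (cases "lo \<le> x \<and> x < n")
    case True
    then have "x \<noteq> n" by auto
    then show ?thesis
      unfolding V_rec using True q b1[of "q x" "x+1" 1] b1[of "1 - q x" "x+1" 1]
        b1[of "q x" "x-1" "-1"] b1[of "1 - q x" "x-1" "-1"] by auto
  next
    case False
    then show ?thesis unfolding V_rec by (simp only: if_not_P[OF False]) simp
  qed
qed

lemma G_summable:
  assumes "\<forall>y. 0 \<le> q y \<and> q y \<le> 1"
  shows "summable (\<lambda>k. G q lo n k x d)"
  by (rule summableI_nonneg_bounded[where x=1]) (use G_nonneg[OF assms] V_bound[OF assms] in auto)

lemma suminf_lin: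
  fixes A B :: "nat \<Rightarrow> real"
  assumes "summable A" "summable B"
  shows "(\<Sum>k. c1 * A k + c2 * B k) = c1 * suminf A + c2 * suminf B"
proof -
  have "(\<Sum>k. c1 * A k + c2 * B k) = (\<Sum>k. c1 * A k) + (\<Sum>k. c2 * B k)"
    by (rule suminf_add[symmetric]) (use assms summable_mult in auto)
  also have "\<dots> = c1 * suminf A + c2 * suminf B"
    using suminf_mult[OF assms(1)] suminf_mult[OF assms(2)] by simp
  finally show ?thesis .
qed

lemma L_rec:
  assumes "\<forall>y. 0 \<le> q y \<and> q y \<le> 1"
  shows "(\<Sum>k. G q lo n k x d) = (if x = n then 1 else 0) + (if lo \<le> x \<and> x < n then
     (if d = 1 then q x else 1 - q x) * (\<Sum>k. G q lo n k (x + 1) 1)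
   + (if d = 1 then 1 - q x else q x) * (\<Sum>k. G q lo n k (x - 1) (-1)) else 0)"
proof -
  note s = G_summable[OF assms]
  have "(\<Sum>k. G q lo n k x d) = G q lo n 0 x d + (\<Sum>k. G q lo n (Suc k) x d)"
  proof -
    have h: "(\<Sum>k. G q lo n (Suc k) x d) = (\<Sum>k. G q lo n k x d) - G q lo n 0 x d"
      by (rule suminf_split_head[OF s])
    show ?thesis using h by linarith
  qed
  also have "(\<Sum>k. G q lo n (Suc k) x d) = (if lo \<le> x \<and> x < n then
     (if d = 1 then q x else 1 - q x) * (\<Sum>k. G q lo n k (x + 1) 1)
   + (if d = 1 then 1 - q x else q x) * (\<Sum>k. G q lo n k (x - 1) (-1)) else 0)"
  proof (cases "lo \<le> x \<and> x < n")
    case True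
    then show ?thesis
      by (simp add: suminf_lin[OF s s])
  next
    case False
    then show ?thesis by (simp only: G.simps if_not_P[OF False]) simp
  qed
  finally show ?thesis by simp
qed

lemma uniq:
  fixes L :: "int \<Rightarrow> int \<Rightarrow> real" and q :: "int \<Rightarrow> real"
  assumes q: "\<And>x. 0 < q x" "\<And>x. q x \<le> 1"
    and lon: "lo < n"
    and eqU: "\<And>x. lo \<le> x \<Longrightarrow> x < n \<Longrightarrow> L x 1 = q x * L (x+1) 1 + (1 - q x) * L (x-1) (-1)"
    and eqD: "\<And>x. lo \<le> x \<Longrightarrow> x < n \<Longrightarrow> L x (-1) = (1 - q x) * L (x+1) 1 + q x * L (x-1) (-1)"
    and bn: "L n 1 = 1" and bl: "L (lo-1) (-1) = 0"
  shows "L (lo+1) 1 = 1 / (q lo * (1 + (\<Sum>x\<in>{lo..<n}. (1 - q x) / q x)))"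
proof -
  define c where "c x = L (x+1) 1 - L x (-1)" for x
  define C where "C = c (lo - 1)"
  define w where "w x = (1 - q x) / q x" for x
  have ca: "c x = q x * (L (x+1) 1 - L (x-1) (-1))" if "lo \<le> x" "x < n" for x
    using eqD[OF that] unfolding c_def by (simp add: algebra_simps)
  have cb: "c (x-1) = q x * (L (x+1) 1 - L (x-1) (-1))" if "lo \<le> x" "x < n" for x
    using eqU[OF that] unfolding c_def by (simp add: algebra_simps)
  have cconst: "c (lo - 1 + int i) = C" if "int i \<le> n - lo" for i
    using that
  proof (induction i)
    case 0 then show ?case by (simp add: C_def)
  next
    case (Suc i)
    have "c (lo + int i) = c (lo + int i - 1)"
      using ca[of "lo + int i"] cb[of "lo + int i"] Suc.prems by simp
    then show ?case using Suc by (simp add: algebra_simps)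
  qed
  have cx: "c x = C" if "lo - 1 \<le> x" "x \<le> n - 1" for x
    using cconst[of "nat (x - lo + 1)"] that by simp
  have dstep: "L x (-1) - L (x-1) (-1) = C * w x" if "lo \<le> x" "x < n" for x
  proof -
    have "C = q x * (L (x+1) 1 - L (x-1) (-1))" using ca[OF that] cx[of x] that by simp
    moreover have "L x (-1) = L (x+1) 1 - C" using cx[of x] that unfolding c_def by simp
    ultimately have D: "C = q x * (C + (L x (-1) - L (x-1) (-1)))" by simp
    have qn: "q x \<noteq> 0" using q[of x] by simp
    have "C / q x = C + (L x (-1) - L (x-1) (-1))"
      using D qn by (simp add: divide_eq_eq mult.commute)
    then show ?thesis unfolding w_def using qn by (simp add: diff_divide_distrib right_diff_distrib)
  qed
  have dsum: "L (lo - 1 + int i) (-1) = C * (\<Sum>y\<in>{lo..<lo + int i}. w y)" if "int i \<le> n - lo" for i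
    using that
  proof (induction i)
    case 0 then show ?case using bl by simp
  next
    case (Suc i)
    have e: "{lo..<lo + int (Suc i)} = insert (lo + int i) {lo..<lo + int i}" by auto
    have "L (lo + int i) (-1) = L (lo + int i - 1) (-1) + C * w (lo + int i)"
      using dstep[of "lo + int i"] Suc.prems by simp
    moreover have "sum w {lo..<lo + int (Suc i)} = w (lo+int i) + sum w {lo..<lo+int i}"
      unfolding e by (simp add: sum.insert)
    ultimately show ?case using Suc by (simp add: algebra_simps)
  qed
  define W where "W = (\<Sum>y\<in>{lo..<n}. w y)"
  have Wn: "L (n-1) (-1) = C * W"
    using dsum[of "nat (n - lo)"] lon unfolding W_def by simp
  have "c (n-1) = C" using cx lon by simp
  then have "1 - C * W = C" using Wn bn unfolding c_def by simp
  moreover have W0: "0 \<le> W" unfolding W_def w_def using q by (intro sum_nonneg) (simp add: less_imp_le)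
  ultimately have CW: "C = 1 / (1 + W)" by (simp add: field_simps)
  have "C = q lo * L (lo+1) 1" using ca[of lo] cx[of lo] lon bl by simp
  then have "L (lo+1) 1 = C / q lo" using q[of lo] by (simp add: field_simps)
  then show ?thesis using CW unfolding W_def w_def by simp
qed

lemma pos_0[simp]: "pgr_pos m es 0 = m" by (simp add: pgr_pos_def)
lemma pos_Cons_Suc[simp]: "pgr_pos m (e#es) (Suc j) = pgr_pos (m+e) es j" by (simp add: pgr_pos_def)
lemma pos_Suc: "i < length es \<Longrightarrow> pgr_pos m es (Suc i) = pgr_pos m es i + es!i"
  by (simp add: pgr_pos_def take_Suc_conv_app_nth)
lemma pos_neg: "pgr_pos (-m) (map uminus es) j = - pgr_pos m es j"
proof -
  have "sum_list (map uminus xs) = - sum_list (xs::int list)" for xs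
    by (induction xs) auto
  then show ?thesis by (simp add: pgr_pos_def take_map)
qed

lemma hit_char: "hit lo n x es \<longleftrightarrow> pgr_pos x es (length es) = n \<and>
   (\<forall>j<length es. lo \<le> pgr_pos x es j \<and> pgr_pos x es j < n)"
  by (induction es arbitrary: x) (auto simp: All_less_Suc2)

lemma prod_pp:
  "(\<Prod>i\<in>{1..<Suc (length es)}. (let p = pgr_a a b f \<bar>pgr_pos m (e#es) i\<bar> in
      if (e#es) ! i = (e#es) ! (i - 1) then p else 1 - p)) = pp (qf a b f) (m+e) e es"
proof (induction es arbitrary: m e)
  case Nil
  then show ?case by simp
next
  case (Cons e' es)
  have "(\<Prod>i\<in>{1..<Suc (Suc (length es))}. (let p = pgr_a a b f \<bar>pgr_pos m (e#e'#es) i\<bar> in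
      if (e#e'#es) ! i = (e#e'#es) ! (i - 1) then p else 1 - p))
    = (let p = pgr_a a b f \<bar>pgr_pos m (e#e'#es) 1\<bar> in
      if (e#e'#es) ! 1 = (e#e'#es) ! (1 - 1) then p else 1 - p) *
      (\<Prod>i\<in>{Suc 1..<Suc (Suc (length es))}. (let p = pgr_a a b f \<bar>pgr_pos m (e#e'#es) i\<bar> in
      if (e#e'#es) ! i = (e#e'#es) ! (i - 1) then p else 1 - p))"
    by (rule prod.atLeast_Suc_lessThan) simp
  also have "(\<Prod>i\<in>{Suc 1..<Suc (Suc (length es))}. (let p = pgr_a a b f \<bar>pgr_pos m (e#e'#es) i\<bar> in
      if (e#e'#es) ! i = (e#e'#es) ! (i - 1) then p else 1 - p))
    = (\<Prod>i\<in>{1..<Suc (length es)}. (let p = pgr_a a b f \<bar>pgr_pos (m+e) (e'#es) i\<bar> in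
      if (e'#es) ! i = (e'#es) ! (i - 1) then p else 1 - p))"
    unfolding prod.shift_bounds_Suc_ivl
    by (rule prod.cong) (auto simp: nth_Cons')
  also have "\<dots> = pp (qf a b f) (m+e+e') e' es" by (rule Cons.IH)
  finally have calc: "(\<Prod>i\<in>{1..<Suc (Suc (length es))}. (let p = pgr_a a b f \<bar>pgr_pos m (e#e'#es) i\<bar> in
      if (e#e'#es) ! i = (e#e'#es) ! (i - 1) then p else 1 - p)) = (let p = pgr_a a b f \<bar>pgr_pos m (e#e'#es) 1\<bar> in
      if (e#e'#es) ! 1 = (e#e'#es) ! (1 - 1) then p else 1 - p) * pp (qf a b f) (m+e+e') e' es" .
  have f1: "(let p = pgr_a a b f \<bar>pgr_pos m (e#e'#es) 1\<bar> in
      if (e#e'#es) ! 1 = (e#e'#es) ! (1 - 1) then p else 1 - p) = (if e' = e then qf a b f (m+e) else 1 - qf a b f (m+e))"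
    by (simp add: qf_def pgr_pos_def)
  have L: "length (e'#es) = Suc (length es)" by simp
  show ?case by (simp only: L calc f1 pp.simps)
qed

lemma path_Cons: "pgr_path_prob a b f m (e#es) = 1/2 * pp (qf a b f) (m+e) e es"
  unfolding pgr_path_prob_def using prod_pp[of a b f m e es] by simp

lemma path_neg: "pgr_path_prob a b f m (map uminus es) = pgr_path_prob a b f (-m) es"
proof -
  have p: "pgr_pos m (map uminus es) j = - pgr_pos (-m) es j" for j
    using pos_neg[of "-m" es j] by simp
  show ?thesis
    unfolding pgr_path_prob_def
    by (auto intro!: prod.cong arg_cong[where f="\<lambda>x. x / 2"] simp: p Let_def)
qed

lemma ivt_up:
  fixes X :: "nat \<Rightarrow> int"
  shows "(\<forall>i<j. \<bar>X (Suc i) - X i\<bar> \<le> 1) \<Longrightarrow> X 0 \<le> v \<Longrightarrow> v \<le> X j \<Longrightarrow> \<exists>i\<le>j. X i = v"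
proof (induction j)
  case 0 then show ?case by auto
next
  case (Suc j)
  have st: "\<forall>i<j. \<bar>X (Suc i) - X i\<bar> \<le> 1" using Suc.prems(1) by simp
  have sj: "\<bar>X (Suc j) - X j\<bar> \<le> 1" using Suc.prems(1) by simp
  show ?case
  proof (cases "v \<le> X j")
    case True
    then obtain i where "i \<le> j" "X i = v" using Suc.IH[OF st Suc.prems(2)] by blast
    then show ?thesis using le_SucI by blast
  next
    case False
    then have "X (Suc j) = v" using sj Suc.prems(3) by linarith
    then show ?thesis by blast
  qed
qed

lemma ivt_down:
  fixes X :: "nat \<Rightarrow> int"
  shows "(\<forall>i<j. \<bar>X (Suc i) - X i\<bar> \<le> 1) \<Longrightarrow> v \<le> X 0 \<Longrightarrow> X j \<le> v \<Longrightarrow> \<exists>i\<le>j. X i = v"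
  using ivt_up[of j "\<lambda>i. - X i" "-v"] by (simp add: abs_minus_commute)

lemma steps:
  assumes "set es \<subseteq> {-1,1}"
  shows "\<forall>i<length es. \<bar>pgr_pos m es (Suc i) - pgr_pos m es i\<bar> \<le> 1"
proof (intro allI impI)
  fix i assume i: "i < length es"
  then have "es ! i \<in> {-1,1}" using assms nth_mem by blast
  then show "\<bar>pgr_pos m es (Suc i) - pgr_pos m es i\<bar> \<le> 1" using pos_Suc[OF i] by auto
qed

lemma ev_up:
  assumes "0 \<le> m" "m < n" "n < N" "set es \<subseteq> {-1,1}"
  shows "pgr_event N m n es \<longleftrightarrow> es \<noteq> [] \<and> hit m n m es"
proof -
  define X where "X = pgr_pos m es"
  define k where "k = length es"
  have st: "\<forall>i<k. \<bar>X (Suc i) - X i\<bar> \<le> 1" using steps[OF assms(4)] unfolding X_def k_def .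
  have X0: "X 0 = m" by (simp add: X_def)
  have ev: "pgr_event N m n es \<longleftrightarrow> 1 \<le> k \<and> (X k = n \<or> \<bar>X k\<bar> = N) \<and>
      (\<forall>j\<in>{1..<k}. X j \<noteq> n \<and> \<bar>X j\<bar> < N) \<and> (\<forall>j\<le>k. m \<le> X j)"
    unfolding pgr_event_def X_def k_def Let_def using assms(2) by simp
  have ht: "(es \<noteq> [] \<and> hit m n m es) \<longleftrightarrow> 1 \<le> k \<and> X k = n \<and> (\<forall>j<k. m \<le> X j \<and> X j < n)"
    unfolding hit_char X_def k_def by (cases es) auto
  show ?thesis
  proof
    assume E: "pgr_event N m n es"
    then have k1: "1 \<le> k" and fin: "X k = n \<or> \<bar>X k\<bar> = N"
      and mid: "\<forall>j\<in>{1..<k}. X j \<noteq> n \<and> \<bar>X j\<bar> < N" and lo: "\<forall>j\<le>k. m \<le> X j"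
      using ev by auto
    have below: "X j < n" if "j < k" for j
    proof (rule ccontr)
      assume "\<not> X j < n"
      moreover have "\<forall>i<j. \<bar>X (Suc i) - X i\<bar> \<le> 1" using st that by auto
      ultimately obtain i where i: "i \<le> j" "X i = n" using ivt_up[of j X n] X0 assms(2) by auto
      moreover have "i \<noteq> 0" using X0 assms(2) i(2) by (cases "i = 0") auto
      ultimately show False using mid that by auto
    qed
    have "X k = n"
    proof (rule ccontr)
      assume nk: "X k \<noteq> n"
      then have "\<bar>X k\<bar> = N" using fin by auto
      moreover have "0 \<le> X k" using lo assms(1) by auto
      ultimately have "n \<le> X k" using assms(3) by auto
      then obtain i where i: "i \<le> k" "X i = n" using ivt_up[of k X n] st X0 assms(2) by auto
      moreover have "i \<noteq> 0" using X0 assms(2) i(2) by (cases "i = 0") auto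
      ultimately show False using mid nk by (cases "i = k") auto
    qed
    then show "es \<noteq> [] \<and> hit m n m es" using ht k1 below lo by auto
  next
    assume "es \<noteq> [] \<and> hit m n m es"
    then have k1: "1 \<le> k" and fk: "X k = n" and bl: "\<forall>j<k. m \<le> X j \<and> X j < n" using ht by auto
    have a1: "\<forall>j\<in>{1..<k}. X j \<noteq> n \<and> \<bar>X j\<bar> < N" using bl assms by fastforce
    have a2: "\<forall>j\<le>k. m \<le> X j"
    proof (intro allI impI)
      fix j assume "j \<le> k"
      then show "m \<le> X j" by (cases "j = k") (use bl fk assms(2) in auto)
    qed
    show "pgr_event N m n es" unfolding ev using k1 fk a1 a2 by auto
  qed
qed

lemma ev_down:
  assumes "0 \<le> n" "n < m" "m < N" "set es \<subseteq> {-1,1}"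
  shows "pgr_event N m n es \<longleftrightarrow> es \<noteq> [] \<and> hit (-m) (-n) (-m) (map uminus es)"
proof -
  define X where "X = pgr_pos m es"
  define k where "k = length es"
  have st: "\<forall>i<k. \<bar>X (Suc i) - X i\<bar> \<le> 1" using steps[OF assms(4)] unfolding X_def k_def .
  have X0: "X 0 = m" by (simp add: X_def)
  have ev: "pgr_event N m n es \<longleftrightarrow> 1 \<le> k \<and> (X k = n \<or> \<bar>X k\<bar> = N) \<and>
      (\<forall>j\<in>{1..<k}. X j \<noteq> n \<and> \<bar>X j\<bar> < N) \<and> (\<forall>j\<le>k. X j \<le> m)"
    unfolding pgr_event_def X_def k_def Let_def using assms(2) by simp
  have ht: "(es \<noteq> [] \<and> hit (-m) (-n) (-m) (map uminus es)) \<longleftrightarrow> 1 \<le> k \<and> X k = n \<and> (\<forall>j<k. X j \<le> m \<and> n < X j)"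
    unfolding hit_char X_def k_def pos_neg by (cases es) auto
  show ?thesis
  proof
    assume E: "pgr_event N m n es"
    then have k1: "1 \<le> k" and fin: "X k = n \<or> \<bar>X k\<bar> = N"
      and mid: "\<forall>j\<in>{1..<k}. X j \<noteq> n \<and> \<bar>X j\<bar> < N" and hi: "\<forall>j\<le>k. X j \<le> m"
      using ev by auto
    have above: "n < X j" if "j < k" for j
    proof (rule ccontr)
      assume "\<not> n < X j"
      moreover have "\<forall>i<j. \<bar>X (Suc i) - X i\<bar> \<le> 1" using st that by auto
      ultimately obtain i where i: "i \<le> j" "X i = n" using ivt_down[of j X n] X0 assms(2) by auto
      moreover have "i \<noteq> 0" using X0 assms(2) i(2) by (cases "i = 0") auto
      ultimately show False using mid that by auto
    qed
    have "X k = n"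
    proof (rule ccontr)
      assume nk: "X k \<noteq> n"
      have "k - 1 < k" using k1 by auto
      then have "n < X (k - 1)" by (rule above)
      moreover have "\<bar>X (Suc (k-1)) - X (k-1)\<bar> \<le> 1" using st \<open>k - 1 < k\<close> by blast
      moreover have "Suc (k-1) = k" using k1 by simp
      ultimately have "\<bar>X k - X (k-1)\<bar> \<le> 1" "n < X (k - 1)" by simp_all
      then have "n \<le> X k" by (simp add: abs_le_iff)
      then have "0 \<le> X k" using assms(1) by auto
      moreover have "X k \<le> m" using hi by auto
      ultimately have "\<bar>X k\<bar> < N" using assms(3) by auto
      then show False using fin nk by auto
    qed
    then show "es \<noteq> [] \<and> hit (-m) (-n) (-m) (map uminus es)" using ht k1 above hi by auto
  next
    assume "es \<noteq> [] \<and> hit (-m) (-n) (-m) (map uminus es)"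
    then have k1: "1 \<le> k" and fk: "X k = n" and bl: "\<forall>j<k. X j \<le> m \<and> n < X j" using ht by auto
    have a1: "\<forall>j\<in>{1..<k}. X j \<noteq> n \<and> \<bar>X j\<bar> < N" using bl assms by fastforce
    have a2: "\<forall>j\<le>k. X j \<le> m"
    proof (intro allI impI)
      fix j assume "j \<le> k"
      then show "X j \<le> m" by (cases "j = k") (use bl fk assms(2) in auto)
    qed
    show "pgr_event N m n es" unfolding ev using k1 fk a1 a2 by auto
  qed
qed

lemma qf_pos: "0 < a \<Longrightarrow> a < 1 \<Longrightarrow> 0 < b \<Longrightarrow> b < 1 \<Longrightarrow> 0 < qf a b f y \<and> qf a b f y < 1"
  by (simp add: qf_def pgr_a_def)

lemma hit_below: "x < lo \<Longrightarrow> lo < n \<Longrightarrow> \<not> hit lo n x es"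
  by (cases es) auto

lemma up_sums:
  assumes ab: "0 < a" "a < 1" "0 < b" "b < 1" and lon: "lo < n"
  shows "(\<lambda>k. \<Sum>es\<in>{es. length es = k \<and> set es \<subseteq> {-1,1} \<and> es \<noteq> [] \<and> hit lo n lo es}.
            pgr_path_prob a b f lo es)
    sums (1 / (2 * (qf a b f lo * (1 + (\<Sum>x\<in>{lo..<n}. (1 - qf a b f x) / qf a b f x)))))"
proof -
  define q where "q = qf a b f"
  have qp: "0 < q y" "q y < 1" for y using qf_pos[OF ab] unfolding q_def by auto
  have qb: "\<forall>y. 0 \<le> q y \<and> q y \<le> 1" using qp by (simp add: less_imp_le)
  define L where "L x d = (\<Sum>k. G q lo n k x d)" for x d
  have Lr: "L x d = (if x = n then 1 else 0) + (if lo \<le> x \<and> x < n then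
     (if d = 1 then q x else 1 - q x) * L (x + 1) 1
   + (if d = 1 then 1 - q x else q x) * L (x - 1) (-1) else 0)" for x d
    unfolding L_def by (rule L_rec[OF qb])
  have Lval: "L (lo+1) 1 = 1 / (q lo * (1 + (\<Sum>x\<in>{lo..<n}. (1 - q x) / q x)))"
  proof (rule uniq)
    show "0 < q x" "q x \<le> 1" for x using qp[of x] by auto
    show "lo < n" by (rule lon)
    show "L x 1 = q x * L (x+1) 1 + (1 - q x) * L (x-1) (-1)" if "lo \<le> x" "x < n" for x
      using Lr[of x 1] that by simp
    show "L x (-1) = (1 - q x) * L (x+1) 1 + q x * L (x-1) (-1)" if "lo \<le> x" "x < n" for x
      using Lr[of x "-1"] that by simp
    show "L n 1 = 1" using Lr[of n 1] by simp
    show "L (lo-1) (-1) = 0" using Lr[of "lo-1" "-1"] lon by simp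
  qed
  define T where "T k = (\<Sum>es\<in>{es. length es = k \<and> set es \<subseteq> {-1,1} \<and> es \<noteq> [] \<and> hit lo n lo es}.
            pgr_path_prob a b f lo es)" for k
  have T0: "T 0 = 0"
  proof -
    have "{es::int list. length es = 0 \<and> set es \<subseteq> {-1,1} \<and> es \<noteq> [] \<and> hit lo n lo es} = {}" by auto
    then show ?thesis unfolding T_def by (simp only: sum.empty)
  qed
  have TS: "T (Suc k) = 1/2 * G q lo n k (lo+1) 1" for k
  proof -
    define A1 where "A1 = {es::int list. length es = k \<and> set es \<subseteq> {-1,1} \<and> hit lo n (lo+1) es}"
    have "{es. length es = Suc k \<and> set es \<subseteq> {-1,1} \<and> es \<noteq> [] \<and> hit lo n lo es} = Cons 1 ` A1"
    proof -
      have e2: "{es. length es = k \<and> set es \<subseteq> {-1,1} \<and> (-1)#es \<noteq> [] \<and> hit lo n lo ((-1)#es)} = {}"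
        using hit_below[of "lo-1" lo n] lon by auto
      have e1: "{es. length es = k \<and> set es \<subseteq> {-1,1} \<and> 1#es \<noteq> [] \<and> hit lo n lo (1#es)} = A1"
        using lon by (auto simp: A1_def)
      show ?thesis by (simp only: split_Suc e1 e2) simp
    qed
    then have "T (Suc k) = (\<Sum>es\<in>A1. pgr_path_prob a b f lo (1 # es))"
      unfolding T_def by (simp add: sum.reindex)
    also have "\<dots> = 1/2 * (\<Sum>es\<in>A1. pp q (lo+1) 1 es)"
      by (simp add: path_Cons sum_distrib_left q_def)
    also have "\<dots> = 1/2 * G q lo n k (lo+1) 1"
      unfolding A1_def by (subst S_eq_G) simp_all
    finally show ?thesis .
  qed
  have "(\<lambda>k. T (Suc k)) sums (1/2 * L (lo+1) 1)"
    unfolding TS L_def by (rule sums_mult[OF summable_sums[OF G_summable[OF qb]]])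
  then have "T sums (1/2 * L (lo+1) 1)" using T0 by (simp add: sums_Suc_iff)
  then show ?thesis unfolding T_def Lval q_def by simp
qed

lemma rho_up:
  assumes ab: "0 < a" "a < 1" "0 < b" "b < 1" and mn: "0 \<le> m" "m < n" "n < N"
  shows "pgr_rho a b f N m n = 1 / (2 * (qf a b f m * (1 + (\<Sum>x\<in>{m..<n}. (1 - qf a b f x) / qf a b f x))))"
proof -
  have "{es. length es = k \<and> set es \<subseteq> {-1,1} \<and> pgr_event N m n es} =
        {es. length es = k \<and> set es \<subseteq> {-1,1} \<and> es \<noteq> [] \<and> hit m n m es}" for k
    using ev_up[OF mn] by blast
  then show ?thesis unfolding pgr_rho_def using sums_unique[OF up_sums[OF ab mn(2)]] by simp
qed

lemma rho_down:
  assumes ab: "0 < a" "a < 1" "0 < b" "b < 1" and mn: "0 \<le> n" "n < m" "m < N"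
  shows "pgr_rho a b f N m n = 1 / (2 * (qf a b f m * (1 + (\<Sum>x\<in>{n+1..<m+1}. (1 - qf a b f x) / qf a b f x))))"
proof -
  define B where "B k = {es. length es = k \<and> set es \<subseteq> {-1,1} \<and> es \<noteq> [] \<and> hit (-m) (-n) (-m) es}" for k
  have eq: "{es. length es = k \<and> set es \<subseteq> {-1,1} \<and> pgr_event N m n es} = map uminus ` B k" for k
  proof (rule set_eqI, rule iffI)
    fix es assume "es \<in> {es. length es = k \<and> set es \<subseteq> {-1,1} \<and> pgr_event N m n es}"
    then have h: "length es = k" "set es \<subseteq> {-1,1}" "pgr_event N m n es" by auto
    have "map uminus es \<in> B k" using h ev_down[OF mn h(2)] unfolding B_def by auto
    moreover have "es = map uminus (map uminus es)" by simp
    ultimately show "es \<in> map uminus ` B k" by blast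
  next
    fix es assume "es \<in> map uminus ` B k"
    then obtain es' where es: "es = map uminus es'" "es' \<in> B k" by auto
    have s: "set es \<subseteq> {-1,1}" using es unfolding B_def by auto
    show "es \<in> {es. length es = k \<and> set es \<subseteq> {-1,1} \<and> pgr_event N m n es}"
      using es s ev_down[OF mn s] unfolding B_def by auto
  qed
  have inj: "inj_on (map uminus) (B k)" for k
    by (rule inj_onI) (drule arg_cong[where f="map uminus"], simp)
  have "(\<Sum>es\<in>{es. length es = k \<and> set es \<subseteq> {-1,1} \<and> pgr_event N m n es}. pgr_path_prob a b f m es)
      = (\<Sum>es\<in>B k. pgr_path_prob a b f (-m) es)" for k
    unfolding eq by (simp add: sum.reindex[OF inj] path_neg)
  then have "pgr_rho a b f N m n = (\<Sum>k. \<Sum>es\<in>B k. pgr_path_prob a b f (-m) es)"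
    unfolding pgr_rho_def by simp
  also have "\<dots> = 1 / (2 * (qf a b f (-m) * (1 + (\<Sum>x\<in>{-m..<-n}. (1 - qf a b f x) / qf a b f x))))"
    unfolding B_def by (rule sums_unique[OF up_sums[OF ab], symmetric]) (use mn in simp)
  also have "(\<Sum>x\<in>{-m..<-n}. (1 - qf a b f x) / qf a b f x) = (\<Sum>x\<in>{n+1..<m+1}. (1 - qf a b f x) / qf a b f x)"
    by (rule sum.reindex_bij_witness[of _ uminus uminus]) (simp_all add: qf_def)
  finally show ?thesis by (simp add: qf_def)
qed

lemma alg1:
  fixes a b l j :: real
  assumes "0 < a" "a < 1" "0 < b" "b < 1" "1 \<le> l" "0 \<le> j"
  shows "1 / (2 * (a * (1 + (l * ((1 - a) / a) + j * ((1 - b) / b))))) =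
         (b / (2 * a)) / (j + l * (b / a) - (l + j - 1) * b)"
proof -
  define D where "D = a * (1 + (l * ((1 - a) / a) + j * ((1 - b) / b)))"
  have D: "0 < D" unfolding D_def using assms by (intro mult_pos_pos add_pos_nonneg) (auto intro!: add_nonneg_nonneg mult_nonneg_nonneg divide_nonneg_pos)
  have e: "j + l * (b / a) - (l + j - 1) * b = (b / a) * D"
    unfolding D_def using assms by (simp add: field_simps)
  show ?thesis unfolding e D_def[symmetric] using D assms by (simp add: field_simps)
qed

lemma alg2:
  fixes a b l j :: real
  assumes "0 < a" "a < 1" "0 < b" "b < 1" "1 \<le> l" "0 \<le> j"
  shows "1 / (2 * (b * (1 + ((l - 1) * ((1 - a) / a) + (j + 1) * ((1 - b) / b))))) =
         (1 / 2) / ((j + 1) + (l - 1) * (b / a) - (l + j - 1) * b)"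
proof -
  define D where "D = b * (1 + ((l - 1) * ((1 - a) / a) + (j + 1) * ((1 - b) / b)))"
  have D: "0 < D" unfolding D_def using assms by (intro mult_pos_pos add_pos_nonneg) (auto intro!: add_nonneg_nonneg mult_nonneg_nonneg divide_nonneg_pos)
  have e: "(j + 1) + (l - 1) * (b / a) - (l + j - 1) * b = D"
    unfolding D_def using assms by (simp add: field_simps)
  show ?thesis unfolding e D_def[symmetric] using D assms by (simp add: field_simps)
qed

lemma alg3:
  fixes a l :: real
  assumes "0 < a" "a < 1"
  shows "1 / (2 * (a * (1 + l * ((1 - a) / a)))) = 1 / (2 * (l - (l - 1) * a))"
proof -
  have "a * (1 + l * ((1 - a) / a)) = l - (l - 1) * a" using assms by (simp add: field_simps)
  then show ?thesis by simp
qed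

lemma sum_split_int:
  fixes g :: "int \<Rightarrow> real"
  assumes "u \<le> w" "w \<le> v"
  shows "sum g {u..<v} = sum g {u..<w} + sum g {w..<v}"
proof -
  have "{u..<v} = {u..<w} \<union> {w..<v}" using assms by auto
  then show ?thesis by (simp add: sum.union_disjoint)
qed

lemma sum_const_int:
  fixes g :: "int \<Rightarrow> real"
  assumes "u \<le> v" "\<And>x. u \<le> x \<Longrightarrow> x < v \<Longrightarrow> g x = c"
  shows "sum g {u..<v} = of_int (v - u) * c"
proof -
  have "sum g {u..<v} = sum (\<lambda>_. c) {u..<v}" by (rule sum.cong) (use assms in auto)
  then show ?thesis using assms(1) by simp
qed

lemma qf_nonneg: "0 \<le> x \<Longrightarrow> qf a b f x = (if x < f then a else b)"
  by (simp add: qf_def pgr_a_def)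

theorem proposition1:
  fixes a b :: real and f N :: int
  assumes "0 < a" "a < 1" "0 < b" "b < 1" "1 \<le> f" "f < N"
  shows
   "(\<forall>l j :: int. 1 \<le> l \<longrightarrow> 0 \<le> j \<longrightarrow> 0 \<le> f - l \<longrightarrow> f + j < N \<longrightarrow>
       pgr_rho a b f N (f - l) (f + j) =
         (b / (2 * a)) / (of_int j + of_int l * (b / a) - of_int (l + j - 1) * b))
  \<and> (\<forall>l j :: int. 1 \<le> l \<longrightarrow> 0 \<le> j \<longrightarrow> 0 \<le> f - l \<longrightarrow> f + j < N \<longrightarrow>
       pgr_rho a b f N (f + j) (f - l) =
         (1 / 2) / (of_int (j + 1) + of_int (l - 1) * (b / a) - of_int (l + j - 1) * b))
  \<and> (\<forall>m l :: int. 0 \<le> m \<longrightarrow> m < m + l \<longrightarrow> m + l \<le> f - 1 \<longrightarrow>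
       pgr_rho a b f N m (m + l) = 1 / (2 * (of_int l - of_int (l - 1) * a)) \<and>
       pgr_rho a b f N (m + l) m = 1 / (2 * (of_int l - of_int (l - 1) * a)))
  \<and> (\<forall>m j :: int. f \<le> m \<longrightarrow> m < m + j \<longrightarrow> m + j < N \<longrightarrow>
       pgr_rho a b f N m (m + j) = 1 / (2 * (of_int j - of_int (j - 1) * b)) \<and>
       pgr_rho a b f N (m + j) m = 1 / (2 * (of_int j - of_int (j - 1) * b)))"
proof -
  note ab = assms(1-4)
  define w where "w x = (1 - qf a b f x) / qf a b f x" for x
  have wa: "w x = (1 - a) / a" if "0 \<le> x" "x < f" for x using that by (simp add: w_def qf_nonneg)
  have wb: "w x = (1 - b) / b" if "f \<le> x" for x using that assms(5) by (simp add: w_def qf_nonneg)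
  have I1: "\<forall>l j :: int. 1 \<le> l \<longrightarrow> 0 \<le> j \<longrightarrow> 0 \<le> f - l \<longrightarrow> f + j < N \<longrightarrow>
       pgr_rho a b f N (f - l) (f + j) =
         (b / (2 * a)) / (of_int j + of_int l * (b / a) - of_int (l + j - 1) * b)"
  proof (intro allI impI)
    fix l j :: int assume h: "1 \<le> l" "0 \<le> j" "0 \<le> f - l" "f + j < N"
    have r: "pgr_rho a b f N (f-l) (f+j) = 1 / (2 * (qf a b f (f-l) * (1 + (\<Sum>x\<in>{f-l..<f+j}. w x))))"
      unfolding w_def by (rule rho_up) (use assms h in auto)
    have q0: "qf a b f (f-l) = a" using h by (simp add: qf_nonneg)
    have s: "(\<Sum>x\<in>{f-l..<f+j}. w x) = of_int l * ((1-a)/a) + of_int j * ((1-b)/b)"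
    proof -
      have "(\<Sum>x\<in>{f-l..<f+j}. w x) = (\<Sum>x\<in>{f-l..<f}. w x) + (\<Sum>x\<in>{f..<f+j}. w x)"
        by (rule sum_split_int) (use h in auto)
      also have "(\<Sum>x\<in>{f-l..<f}. w x) = of_int (f - (f - l)) * ((1-a)/a)"
        by (rule sum_const_int) (use h wa in auto)
      also have "(\<Sum>x\<in>{f..<f+j}. w x) = of_int (f + j - f) * ((1-b)/b)"
        by (rule sum_const_int) (use h wb in auto)
      finally show ?thesis by simp
    qed
    show "pgr_rho a b f N (f - l) (f + j) =
         (b / (2 * a)) / (of_int j + of_int l * (b / a) - of_int (l + j - 1) * b)"
      unfolding r q0 s using alg1[of a b "of_int l" "of_int j"] ab h by simp
  qed
  have I2: "\<forall>l j :: int. 1 \<le> l \<longrightarrow> 0 \<le> j \<longrightarrow> 0 \<le> f - l \<longrightarrow> f + j < N \<longrightarrow>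
       pgr_rho a b f N (f + j) (f - l) =
         (1 / 2) / (of_int (j + 1) + of_int (l - 1) * (b / a) - of_int (l + j - 1) * b)"
  proof (intro allI impI)
    fix l j :: int assume h: "1 \<le> l" "0 \<le> j" "0 \<le> f - l" "f + j < N"
    have r: "pgr_rho a b f N (f+j) (f-l) = 1 / (2 * (qf a b f (f+j) * (1 + (\<Sum>x\<in>{f-l+1..<f+j+1}. w x))))"
      unfolding w_def by (rule rho_down) (use assms h in auto)
    have q0: "qf a b f (f+j) = b" using h assms(5) by (simp add: qf_nonneg)
    have s: "(\<Sum>x\<in>{f-l+1..<f+j+1}. w x) = (of_int l - 1) * ((1-a)/a) + (of_int j + 1) * ((1-b)/b)"
    proof -
      have "(\<Sum>x\<in>{f-l+1..<f+j+1}. w x) = (\<Sum>x\<in>{f-l+1..<f}. w x) + (\<Sum>x\<in>{f..<f+j+1}. w x)"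
        by (rule sum_split_int) (use h in auto)
      also have "(\<Sum>x\<in>{f-l+1..<f}. w x) = of_int (f - (f - l + 1)) * ((1-a)/a)"
        by (rule sum_const_int) (use h wa in auto)
      also have "(\<Sum>x\<in>{f..<f+j+1}. w x) = of_int (f + j + 1 - f) * ((1-b)/b)"
        by (rule sum_const_int) (use h wb in auto)
      finally show ?thesis by simp
    qed
    show "pgr_rho a b f N (f + j) (f - l) =
         (1 / 2) / (of_int (j + 1) + of_int (l - 1) * (b / a) - of_int (l + j - 1) * b)"
      unfolding r q0 s using alg2[of a b "of_int l" "of_int j"] ab h by simp
  qed
  have II1: "\<forall>m l :: int. 0 \<le> m \<longrightarrow> m < m + l \<longrightarrow> m + l \<le> f - 1 \<longrightarrow>
       pgr_rho a b f N m (m + l) = 1 / (2 * (of_int l - of_int (l - 1) * a)) \<and>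
       pgr_rho a b f N (m + l) m = 1 / (2 * (of_int l - of_int (l - 1) * a))"
  proof (intro allI impI)
    fix m l :: int assume h: "0 \<le> m" "m < m + l" "m + l \<le> f - 1"
    have r1: "pgr_rho a b f N m (m+l) = 1 / (2 * (qf a b f m * (1 + (\<Sum>x\<in>{m..<m+l}. w x))))"
      unfolding w_def by (rule rho_up) (use assms h in auto)
    have r2: "pgr_rho a b f N (m+l) m = 1 / (2 * (qf a b f (m+l) * (1 + (\<Sum>x\<in>{m+1..<m+l+1}. w x))))"
      unfolding w_def by (rule rho_down) (use assms h in auto)
    have q1: "qf a b f m = a" "qf a b f (m+l) = a" using h by (simp_all add: qf_nonneg)
    have s1: "(\<Sum>x\<in>{m..<m+l}. w x) = of_int (m + l - m) * ((1-a)/a)"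
      by (rule sum_const_int) (use h wa in auto)
    have s2: "(\<Sum>x\<in>{m+1..<m+l+1}. w x) = of_int (m + l + 1 - (m + 1)) * ((1-a)/a)"
      by (rule sum_const_int) (use h wa in auto)
    have e: "1 / (2 * (a * (1 + of_int l * ((1 - a) / a)))) = 1 / (2 * (of_int l - (of_int l - 1) * a))"
      by (rule alg3) (use ab in auto)
    show "pgr_rho a b f N m (m + l) = 1 / (2 * (of_int l - of_int (l - 1) * a)) \<and>
       pgr_rho a b f N (m + l) m = 1 / (2 * (of_int l - of_int (l - 1) * a))"
      unfolding r1 r2 q1 s1 s2 using e by simp
  qed
  have II2: "\<forall>m j :: int. f \<le> m \<longrightarrow> m < m + j \<longrightarrow> m + j < N \<longrightarrow>
       pgr_rho a b f N m (m + j) = 1 / (2 * (of_int j - of_int (j - 1) * b)) \<and>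
       pgr_rho a b f N (m + j) m = 1 / (2 * (of_int j - of_int (j - 1) * b))"
  proof (intro allI impI)
    fix m j :: int assume h: "f \<le> m" "m < m + j" "m + j < N"
    have r1: "pgr_rho a b f N m (m+j) = 1 / (2 * (qf a b f m * (1 + (\<Sum>x\<in>{m..<m+j}. w x))))"
      unfolding w_def by (rule rho_up) (use assms h in auto)
    have r2: "pgr_rho a b f N (m+j) m = 1 / (2 * (qf a b f (m+j) * (1 + (\<Sum>x\<in>{m+1..<m+j+1}. w x))))"
      unfolding w_def by (rule rho_down) (use assms h in auto)
    have q1: "qf a b f m = b" "qf a b f (m+j) = b" using h assms(5) by (simp_all add: qf_nonneg)
    have s1: "(\<Sum>x\<in>{m..<m+j}. w x) = of_int (m + j - m) * ((1-b)/b)"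
      by (rule sum_const_int) (use h wb in auto)
    have s2: "(\<Sum>x\<in>{m+1..<m+j+1}. w x) = of_int (m + j + 1 - (m + 1)) * ((1-b)/b)"
      by (rule sum_const_int) (use h wb in auto)
    have e: "1 / (2 * (b * (1 + of_int j * ((1 - b) / b)))) = 1 / (2 * (of_int j - (of_int j - 1) * b))"
      by (rule alg3) (use ab in auto)
    show "pgr_rho a b f N m (m + j) = 1 / (2 * (of_int j - of_int (j - 1) * b)) \<and>
       pgr_rho a b f N (m + j) m = 1 / (2 * (of_int j - of_int (j - 1) * b))"
      unfolding r1 r2 q1 s1 s2 using e by simp
  qed
  show ?thesis using I1 I2 II1 II2 by blast
qed

end
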